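(* Let $\lambda\ne0$, let $r>1$, and let $T_1$ be the single-vertex-bag weighted threshold matrix on $v_1,\dots,v_r$ with vertex weights $p^{(1)}_i=0$ if $i\equiv1,2\pmod4$ and $p^{(1)}_i=\lambda$ if $i\equiv0,3\pmod4$ (edge weights $\epsilon^{(1)}_{\ell,j}$ to be chosen). Then for every $i\in\{1,\dots,r-1\}$ the following holds: for every choice of nonzero reals $\epsilon^{(1)}_{\ell,j}$ with $i<\ell<j\le r$, $j$ even, there exist nonzero reals $\epsilon^{(1)}_{\ell,j}$ for all $\ell\le i$ and all even $j>\ell$ ($j\le r$), and single-vertex-bag weighted threshold matrices $T_2,\dots,T_{i+1}$, where $T_m$ lives on $v_m,\dots,v_r$ with vertex weights $p^{(m)}_s$ and edge weights $\epsilon^{(m)}_{s,j}$, such that for every $k\in\{1,\dots,i\}$ (with the convention $\epsilon^{(k)}_{k,k+1}=0$ when $k+1$ is odd): (ii) $\epsilon^{(k)}_{k,j}=\epsilon^{(k)}_{k+1,j}$ for all even $j$ with $k+1<j\le r$; (iii) if $k+1$ is even and $q\in\{0,2\}$ satisfies $k+1\equiv q\pmod 4$, then $\epsilon^{(k)}_{k,k+1}=(q-1)\lambda$; (iv) $p^{(k+1)}_{k+1}=p^{(k)}_k+\epsilon^{(k)}_{k,k+1}$; $\epsilon^{(k+1)}_{k+1,j}=\sqrt2\,\epsilon^{(k)}_{k+1,j}$ for even $j$ with $k+1<j\le r$; $p^{(k+1)}_z=p^{(k)}_z=p^{(1)}_z$ for $k+1<z\le r$; and $\epsilon^{(k+1)}_{z,j}=\epsilon^{(k)}_{z,j}=\epsilon^{(1)}_{z,j}$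 for $k+1<z<j\le r$, $j$ even; (v) $\mathrm{Spec}(T_k)=\mathrm{Spec}(T_{k+1})\cup\{x_k\}$, where $x_k=p^{(k)}_k-\epsilon^{(k)}_{k,k+1}$ (so $x_k=p^{(k)}_k$ if $k$ is even), and $x_k=0$ if $k\equiv0$, $x_k=-\lambda$ if $k\equiv1$, $x_k=\lambda$ if $k\equiv2$, $x_k=2\lambda$ if $k\equiv3\pmod4$.
   Context: A single-vertex-bag weighted threshold matrix on $v_k,\dots,v_r$ is the real symmetric matrix indexed by $v_k,\dots,v_r$ with diagonal entries $p_i$ (the vertex weights) and, for $i<j$, entry $\epsilon_{i,j}\ne 0$ at positions $(v_i,v_j),(v_j,v_i)$ if $j$ is even and entry $0$ if $j$ is odd (so $v_i$ and $v_j$, $i<j$, are adjacent iff $j$ is even). $\mathrm{Spec}$ denotes the multiset of eigenvalues, and $\cup$ of multisets adds multiplicities. *)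

theory Defs
  imports "Jordan_Normal_Form.Char_Poly" "HOL-Computational_Algebra.Polynomial"
begin

text \<open>Row/column index a (0 \<le> a \<le> r-k) corresponds to vertex v_(k+a).\<close>
definition svb_mat :: "nat \<Rightarrow> nat \<Rightarrow> (nat \<Rightarrow> real) \<Rightarrow> (nat \<Rightarrow> nat \<Rightarrow> real) \<Rightarrow> real mat" where
  "svb_mat k r p e = mat (Suc (r - k)) (Suc (r - k)) (\<lambda>(a, b).
     let i = k + a; j = k + b in
     if i = j then p i
     else if i < j then (if even j then e i j else 0)
     else (if even i then e j i else 0))"

definition svb_valid :: "nat \<Rightarrow> nat \<Rightarrow> (nat \<Rightarrow> nat \<Rightarrow> real) \<Rightarrow> bool" where
  "svb_valid k r e \<longleftrightarrow> (\<forall>i j. k \<le> i \<and> i < j \<and> j \<le> r \<and> even j \<longrightarrow> e i j \<noteq> 0)"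

definition Spec :: "real mat \<Rightarrow> complex multiset" where
  "Spec A = proots (char_poly (map_mat complex_of_real A))"

end

theory Submission
  imports Defs
begin

lemma sum2: "2 \<le> (N::nat) \<Longrightarrow> (\<And>l. 2 \<le> l \<Longrightarrow> l < N \<Longrightarrow> g l = (0::'a::comm_monoid_add)) \<Longrightarrow> sum g {0..<N} = g 0 + g 1"
proof -
  assume N: "2 \<le> N" and g: "\<And>l. 2 \<le> l \<Longrightarrow> l < N \<Longrightarrow> g l = 0"
  have z: "\<forall>x\<in>{0..<N} - {0,1}. g x = 0"
  proof
    fix x assume "x \<in> {0..<N} - {0,1}"
    then have "2 \<le> x" "x < N" by auto
    then show "g x = 0" by (rule g)
  qed
  have sub: "{0,1} \<subseteq> {0..<N}" using N by auto
  have "sum g {0..<N} = sum g {0,1}"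
    by (rule sum.mono_neutral_right[OF _ sub z]) simp
  then show ?thesis by simp
qed

lemma sum_unit: "j < (N::nat) \<Longrightarrow> sum (\<lambda>l. g l * (if l = j then 1 else (0::'a::semiring_1))) {0..<N} = g j"
proof -
  assume j: "j < N"
  have "sum (\<lambda>l. g l * (if l = j then 1 else (0::'a))) {0..<N} = sum (\<lambda>l. if l = j then g l else 0) {0..<N}"
    by (rule sum.cong) auto
  also have "\<dots> = g j" using j by (simp add: sum.delta')
  finally show ?thesis .
qed

lemma sum_unit': "j < (N::nat) \<Longrightarrow> sum (\<lambda>l. (if j = l then 1 else (0::'a::semiring_1)) * g l) {0..<N} = g j"
proof -
  assume j: "j < N"
  have "sum (\<lambda>l. (if j = l then 1 else (0::'a)) * g l) {0..<N} = sum (\<lambda>l. if l = j then g l else 0) {0..<N}"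
    by (rule sum.cong) auto
  also have "\<dots> = g j" using j by (simp add: sum.delta')
  finally show ?thesis .
qed

definition Pm :: "nat \<Rightarrow> 'a::field \<Rightarrow> 'a mat" where
  "Pm N t = mat N N (\<lambda>(i,j). if i<2 \<and> j<2 then (if i=1 \<and> j=0 then -t else t) else if i=j then 1 else 0)"

lemma Pm_right: assumes M: "M \<in> carrier_mat N N" and N: "2 \<le> N" and i: "i < N" and j: "j < N"
  shows "(M * Pm N t) $$ (i,j) = (if j = 0 then M$$(i,0) * t - M$$(i,1) * t else if j = 1 then M$$(i,0)*t + M$$(i,1)*t else M$$(i,j))"
proof -
  have e: "(M * Pm N t) $$ (i,j) = sum (\<lambda>l. M$$(i,l) * Pm N t $$ (l,j)) {0..<N}"
    using M i j by (simp add: Pm_def scalar_prod_def)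
  show ?thesis
  proof (cases "j < 2")
    case True
    then have "sum (\<lambda>l. M$$(i,l) * Pm N t $$ (l,j)) {0..<N} = M$$(i,0) * Pm N t $$ (0,j) + M$$(i,1) * Pm N t $$ (1,j)"
      using N j by (intro sum2) (auto simp: Pm_def)
    then show ?thesis using e True N j by (auto simp: Pm_def)
  next
    case False
    have "sum (\<lambda>l. M$$(i,l) * Pm N t $$ (l,j)) {0..<N} = sum (\<lambda>l. M$$(i,l) * (if l = j then 1 else 0)) {0..<N}"
      using False j by (intro sum.cong) (auto simp: Pm_def)
    then show ?thesis using e False j by (simp add: sum_unit)
  qed
qed

lemma Pm_left: assumes M: "M \<in> carrier_mat N N" and N: "2 \<le> N" and i: "i < N" and j: "j < N"
  shows "(Pm N t * M) $$ (i,j) = (if i = 0 then t * M$$(0,j) + t * M$$(1,j) else if i = 1 then - t * M$$(0,j) + t * M$$(1,j) else M$$(i,j))"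
proof -
  have e: "(Pm N t * M) $$ (i,j) = sum (\<lambda>l. Pm N t $$ (i,l) * M$$(l,j)) {0..<N}"
    using M i j by (simp add: Pm_def scalar_prod_def)
  show ?thesis
  proof (cases "i < 2")
    case True
    then have "sum (\<lambda>l. Pm N t $$ (i,l) * M$$(l,j)) {0..<N} = Pm N t $$ (i,0) * M$$(0,j) + Pm N t $$ (i,1) * M$$(1,j)"
      using N i by (intro sum2) (auto simp: Pm_def)
    then show ?thesis using e True N i by (auto simp: Pm_def)
  next
    case False
    have "sum (\<lambda>l. Pm N t $$ (i,l) * M$$(l,j)) {0..<N} = sum (\<lambda>l. (if i = l then 1 else 0) * M$$(l,j)) {0..<N}"
      using False i by (intro sum.cong) (auto simp: Pm_def)
    then show ?thesis using e False i by (simp add: sum_unit')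
  qed
qed

lemma Pm_carrier[simp]: "Pm N t \<in> carrier_mat N N" by (simp add: Pm_def)

lemma Pm_inv: assumes N: "2 \<le> N" and tt: "t * t + t * t = (1::'a::field)"
  shows "Pm N t * transpose_mat (Pm N t) = 1\<^sub>m N" "transpose_mat (Pm N t) * Pm N t = 1\<^sub>m N"
proof -
  show "Pm N t * transpose_mat (Pm N t) = 1\<^sub>m N"
  proof (rule eq_matI)
    fix i j assume i: "i < dim_row (1\<^sub>m N)" and j: "j < dim_col (1\<^sub>m N)"
    then have i: "i < N" and j: "j < N" by auto
    show "(Pm N t * transpose_mat (Pm N t)) $$ (i, j) = 1\<^sub>m N $$ (i, j)"
      by (subst Pm_left[of _ N], insert N i j tt, auto simp: Pm_def)
  qed (auto simp: Pm_def)
  show "transpose_mat (Pm N t) * Pm N t = 1\<^sub>m N"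
  proof (rule eq_matI)
    fix i j assume i: "i < dim_row (1\<^sub>m N)" and j: "j < dim_col (1\<^sub>m N)"
    then have i: "i < N" and j: "j < N" by auto
    show "(transpose_mat (Pm N t) * Pm N t) $$ (i, j) = 1\<^sub>m N $$ (i, j)"
      by (subst Pm_right[of _ N], insert N i j tt, auto simp: Pm_def)
  qed (auto simp: Pm_def)
qed

lemma char_poly_1: "char_poly (mat 1 1 (\<lambda>_. x)) = [:- (x::'a::comm_ring_1), 1:]"
proof -
  have "char_poly (mat 1 1 (\<lambda>_. x)) = (\<Prod> a \<leftarrow> diag_mat (mat 1 1 (\<lambda>_. x)). [:- a, 1:])"
    by (rule char_poly_upper_triangular[of _ 1], auto simp: upper_triangular_def)
  also have "diag_mat (mat 1 1 (\<lambda>_. x)) = [x]" by (simp add: diag_mat_def)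
  finally show ?thesis by simp
qed

lemma abstract_step:
  fixes A B :: "'a::field_char_0 mat" and s a c :: 'a
  assumes A: "A \<in> carrier_mat (n+2) (n+2)" and B: "B \<in> carrier_mat (n+1) (n+1)"
    and s: "s * s = 2"
    and a00: "A $$ (0,0) = a" and a11: "A $$ (1,1) = a" and a01: "A $$ (0,1) = c" and a10: "A $$ (1,0) = c"
    and aw: "\<And>j. 2 \<le> j \<Longrightarrow> j < n+2 \<Longrightarrow> A $$ (1,j) = A $$ (0,j) \<and> A $$ (j,0) = A $$ (0,j) \<and> A $$ (j,1) = A $$ (0,j)"
    and ab: "\<And>i j. 2 \<le> i \<Longrightarrow> i < n+2 \<Longrightarrow> 2 \<le> j \<Longrightarrow> j < n+2 \<Longrightarrow> A $$ (i,j) = B $$ (i-1,j-1)"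
    and b00: "B $$ (0,0) = a + c"
    and bw: "\<And>j. 2 \<le> j \<Longrightarrow> j < n+2 \<Longrightarrow> B $$ (0,j-1) = s * A $$ (0,j) \<and> B $$ (j-1,0) = s * A $$ (0,j)"
  shows "char_poly A = [:-(a-c), 1:] * char_poly B"
proof -
  define t where "t = 1 / s"
  have s0: "s \<noteq> 0" using s by auto
  have tt: "t * t + t * t = 1" using s s0 unfolding t_def by (simp add: field_simps)
  have st: "t * s = 1" using s0 unfolding t_def by simp
  have t2: "2 * t = s" using s s0 unfolding t_def by (simp add: field_simps)
  define N where "N = n + 2"
  have N: "2 \<le> N" unfolding N_def by simp
  define P where "P = Pm N t"
  define D where "D = four_block_mat (mat 1 1 (\<lambda>_. a - c)) (0\<^sub>m 1 (n+1)) (0\<^sub>m (n+1) 1) B"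
  have P: "P \<in> carrier_mat N N" unfolding P_def by simp
  have D: "D \<in> carrier_mat N N" unfolding D_def N_def using B by auto
  have AN: "A \<in> carrier_mat N N" using A unfolding N_def .
  have Dent: "\<And>i j. i < N \<Longrightarrow> j < N \<Longrightarrow> D $$ (i,j) = (if i = 0 then (if j = 0 then a - c else 0)
      else if j = 0 then 0 else B $$ (i-1, j-1))"
    unfolding D_def N_def using B by auto
  have AP: "A * P = P * D"
  proof (rule eq_matI)
    fix i j assume "i < dim_row (P * D)" "j < dim_col (P * D)"
    then have i: "i < N" and j: "j < N" using P D by auto
    have L: "(A * P) $$ (i,j) = (if j = 0 then A$$(i,0) * t - A$$(i,1) * t else if j = 1 then A$$(i,0)*t + A$$(i,1)*t else A$$(i,j))"
      unfolding P_def by (rule Pm_right[OF AN N i j])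
    have R: "(P * D) $$ (i,j) = (if i = 0 then t * D$$(0,j) + t * D$$(1,j) else if i = 1 then - t * D$$(0,j) + t * D$$(1,j) else D$$(i,j))"
      unfolding P_def by (rule Pm_left[OF D N i j])
    have d1: "\<And>j. j < N \<Longrightarrow> D $$ (1,j) = (if j = 0 then 0 else B $$ (0, j-1))" using Dent N by auto
    have d0: "\<And>j. j < N \<Longrightarrow> D $$ (0,j) = (if j = 0 then a - c else 0)" using Dent N by auto
    have j1: "1 < N" using N by simp
    have a01': "A $$ (0,Suc 0) = c" and a10': "A $$ (Suc 0,0) = c" and a11': "A $$ (Suc 0,Suc 0) = a"
      using a01 a10 a11 by simp_all
    have D00: "D $$ (0,0) = a - c" using d0[of 0] N by simp
    have D10: "D $$ (1,0) = 0" using d1[of 0] N by simp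
    have D01: "D $$ (0,1) = 0" using d0[of 1] j1 by simp
    have D11: "D $$ (1,1) = a + c" using d1[of 1] j1 b00 by simp
    have D10': "D $$ (Suc 0,0) = 0" and D01': "D $$ (0,Suc 0) = 0" and D11': "D $$ (Suc 0,Suc 0) = a + c"
      using D10 D01 D11 by simp_all
    show "(A * P) $$ (i,j) = (P * D) $$ (i,j)"
    proof (cases "j = 0")
      case jz: True
      have "i = 0 \<or> i = 1 \<or> 2 \<le> i" by auto
      then show ?thesis
      proof (elim disjE)
        assume "i = 0" then show ?thesis unfolding L R using jz by (simp add: D00 D10 D10' a00 a01 a01' algebra_simps)
      next
        assume "i = 1" then show ?thesis unfolding L R using jz by (simp add: D00 D10 D10' a10 a11 a10' a11' algebra_simps)
      next
        assume ii: "2 \<le> i"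
        then have "D $$ (i,0) = 0" using Dent[OF i, of 0] N by simp
        moreover have "A$$(i,0) = A$$(i,1)" using aw[OF ii] i unfolding N_def by simp
        ultimately show ?thesis unfolding L R using jz ii by simp
      qed
    next
      case j0: False
      show ?thesis
      proof (cases "j = 1")
        case jo: True
        have "i = 0 \<or> i = 1 \<or> 2 \<le> i" by auto
        then show ?thesis
        proof (elim disjE)
          assume "i = 0" then show ?thesis unfolding L R using jo by (simp add: D01 D11 D01' D11' a00 a01 a01' algebra_simps)
        next
          assume "i = 1" then show ?thesis unfolding L R using jo by (simp add: D01 D11 D01' D11' a10 a11 a10' a11' algebra_simps)
        next
          assume ii: "2 \<le> i"
          then have "D $$ (i,1) = B $$ (i-1, 0)" using Dent[OF i j1] by simp
          also have "\<dots> = s * A $$ (0,i)" using bw[OF ii] i unfolding N_def by simp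
          finally have e1: "D $$ (i,1) = s * A $$ (0,i)" .
          have e2: "A$$(i,0) = A$$(0,i)" "A$$(i,1) = A$$(0,i)" using aw[OF ii] i unfolding N_def by auto
          have "A$$(0,i) * t + A$$(0,i) * t = s * A$$(0,i)" using t2 by (simp add: algebra_simps flip: mult_2)
          then show ?thesis unfolding L R using jo ii e1 e2 by simp
        qed
      next
        case False
        have jj: "2 \<le> j" using j0 False by auto
        have tb: "t * B $$ (0, j-1) = A $$ (0,j)" using bw[OF jj] j st unfolding N_def by (simp add: algebra_simps)
        have dd0: "D $$ (0,j) = 0" using d0[OF j] jj by simp
        have dd1: "D $$ (1,j) = B $$ (0, j-1)" using d1[OF j] jj by simp
        have "i = 0 \<or> i = 1 \<or> 2 \<le> i" by auto
        then show ?thesis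
        proof (elim disjE)
          assume "i = 0" then show ?thesis unfolding L R using j0 False dd0 dd1 tb by simp
        next
          assume "i = 1" then show ?thesis unfolding L R using j0 False dd0 dd1 tb aw[OF jj] j unfolding N_def by simp
        next
          assume ii: "2 \<le> i"
          then show ?thesis unfolding L R using j0 False Dent[OF i j] ab[OF ii _ jj] i j unfolding N_def by simp
        qed
      qed
    qed
  qed (use P D AN in auto)
  have inv: "P * transpose_mat P = 1\<^sub>m N" "transpose_mat P * P = 1\<^sub>m N"
    unfolding P_def using Pm_inv[OF N tt] by auto
  have PT: "transpose_mat P \<in> carrier_mat N N" using P by simp
  have "A = A * (P * transpose_mat P)" unfolding inv(1) using right_mult_one_mat[OF AN] by simp
  also have "\<dots> = (A * P) * transpose_mat P" using assoc_mult_mat[OF AN P PT] by simp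
  also have "\<dots> = P * D * transpose_mat P" unfolding AP ..
  finally have AD: "A = P * D * transpose_mat P" .
  have "similar_mat A D"
    by (rule similar_matI[where n=N, OF _ inv AD], use AN D P PT in simp)
  then have "char_poly A = char_poly D" by (rule char_poly_similar)
  also have "\<dots> = char_poly (mat 1 1 (\<lambda>_. a - c)) * char_poly B"
    unfolding D_def by (rule char_poly_four_block_zeros_col, insert B, auto)
  finally show ?thesis unfolding char_poly_1 by simp
qed

lemma svb_ent: "a < Suc (r-k) \<Longrightarrow> b < Suc (r-k) \<Longrightarrow> map_mat complex_of_real (svb_mat k r P E) $$ (a,b) =
  complex_of_real (if a = b then P (k+a) else if a < b then (if even (k+b) then E (k+a) (k+b) else 0)
    else (if even (k+a) then E (k+b) (k+a) else 0))"
  by (simp add: svb_mat_def Let_def)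

lemma svb_carrier: "map_mat complex_of_real (svb_mat k r P E) \<in> carrier_mat (Suc (r-k)) (Suc (r-k))"
  by (simp add: svb_mat_def)

lemma svb_step:
  fixes P P' :: "nat \<Rightarrow> real" and E E' :: "nat \<Rightarrow> nat \<Rightarrow> real"
  assumes kr: "k < r"
    and pk: "P (k+1) = P k"
    and cdef: "c = (if even (k+1) then E k (k+1) else 0)"
    and ii: "\<forall>J. even J \<and> k+1 < J \<and> J \<le> r \<longrightarrow> E k J = E (k+1) J"
    and pp: "P' (k+1) = P k + c"
    and ee: "\<forall>J. even J \<and> k+1 < J \<and> J \<le> r \<longrightarrow> E' (k+1) J = sqrt 2 * E (k+1) J"
    and pz: "\<forall>z. k+1 < z \<and> z \<le> r \<longrightarrow> P' z = P z"
    and ez: "\<forall>z J. k+1 < z \<and> z < J \<and> J \<le> r \<and> even J \<longrightarrow> E' z J = E z J"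
  shows "Spec (svb_mat k r P E) = Spec (svb_mat (k+1) r P' E') + {# complex_of_real (P k - c) #}"
proof -
  define n where "n = r - k - 1"
  have n2: "Suc (r-k) = n+2" and n1: "Suc (r-(k+1)) = n+1" using kr unfolding n_def by auto
  define A where "A = map_mat complex_of_real (svb_mat k r P E)"
  define B where "B = map_mat complex_of_real (svb_mat (k+1) r P' E')"
  have A: "A \<in> carrier_mat (n+2) (n+2)" unfolding A_def using svb_carrier[of k r P E] n2 by simp
  have B: "B \<in> carrier_mat (n+1) (n+1)" unfolding B_def using svb_carrier[of "k+1" r P' E'] n1 by simp
  have Ae: "\<And>a b. a < n+2 \<Longrightarrow> b < n+2 \<Longrightarrow> A $$ (a,b) = complex_of_real (if a = b then P (k+a) else if a < b then (if even (k+b) then E (k+a) (k+b) else 0)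
    else (if even (k+a) then E (k+b) (k+a) else 0))" unfolding A_def using svb_ent[of _ r k _ P E] n2 by simp
  have Be: "\<And>a b. a < n+1 \<Longrightarrow> b < n+1 \<Longrightarrow> B $$ (a,b) = complex_of_real (if a = b then P' (k+1+a) else if a < b then (if even (k+1+b) then E' (k+1+a) (k+1+b) else 0)
    else (if even (k+1+a) then E' (k+1+b) (k+1+a) else 0))" unfolding B_def using svb_ent[of _ r "k+1" _ P' E'] n1 by simp
  have s: "complex_of_real (sqrt 2) * complex_of_real (sqrt 2) = 2"
    by (simp flip: of_real_mult)
  have cp: "char_poly A = [:-(complex_of_real (P k) - complex_of_real c), 1:] * char_poly B"
  proof (rule abstract_step[OF A B s])
    show "A $$ (0,0) = complex_of_real (P k)" using Ae[of 0 0] by simp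
    show "A $$ (1,1) = complex_of_real (P k)" using Ae[of 1 1] pk by simp
    show "A $$ (0,1) = complex_of_real c" using Ae[of 0 1] cdef by simp
    show "A $$ (1,0) = complex_of_real c" using Ae[of 1 0] cdef by simp
    show "B $$ (0,0) = complex_of_real (P k) + complex_of_real c" using Be[of 0 0] pp by simp
  next
    fix j assume j: "2 \<le> j" "j < n+2"
    have jr: "k + j \<le> r" using j kr unfolding n_def by auto
    show "A $$ (1,j) = A $$ (0,j) \<and> A $$ (j,0) = A $$ (0,j) \<and> A $$ (j,1) = A $$ (0,j)"
      using Ae[of 1 j] Ae[of 0 j] Ae[of j 0] Ae[of j 1] j ii jr by auto
  next
    fix j assume j: "2 \<le> j" "j < n+2"
    have jr: "k + j \<le> r" using j kr unfolding n_def by auto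
    have e1: "B $$ (0,j-1) = complex_of_real (if even (k+j) then E' (k+1) (k+j) else 0)"
      using Be[of 0 "j-1"] j by simp
    have e2: "B $$ (j-1,0) = complex_of_real (if even (k+j) then E' (k+1) (k+j) else 0)"
      using Be[of "j-1" 0] j by simp
    have e3: "A $$ (0,j) = complex_of_real (if even (k+j) then E k (k+j) else 0)"
      using Ae[of 0 j] j by simp
    show "B $$ (0,j-1) = complex_of_real (sqrt 2) * A $$ (0,j) \<and> B $$ (j-1,0) = complex_of_real (sqrt 2) * A $$ (0,j)"
      unfolding e1 e2 e3 using ee ii jr j by (auto simp flip: of_real_mult)
  next
    fix i j assume i: "2 \<le> i" "i < n+2" and j: "2 \<le> j" "j < n+2"
    have jr: "k + j \<le> r" "k + i \<le> r" using i j kr unfolding n_def by auto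
    have e1: "A $$ (i,j) = complex_of_real (if i = j then P (k+i) else if i < j then (if even (k+j) then E (k+i) (k+j) else 0)
      else (if even (k+i) then E (k+j) (k+i) else 0))" using Ae i j by simp
    have e2: "B $$ (i-1,j-1) = complex_of_real (if i = j then P' (k+i) else if i < j then (if even (k+j) then E' (k+i) (k+j) else 0)
      else (if even (k+i) then E' (k+j) (k+i) else 0))" using Be[of "i-1" "j-1"] i j by auto
    show "A $$ (i,j) = B $$ (i-1,j-1)" unfolding e1 e2 using pz ez i j jr by auto
  qed
  have nz: "char_poly B \<noteq> 0" using degree_monic_char_poly[OF B] by auto
  have "Spec (svb_mat k r P E) = proots (char_poly A)" unfolding Spec_def A_def ..
  also have "\<dots> = proots [:-(complex_of_real (P k) - complex_of_real c), 1:] + proots (char_poly B)"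
    unfolding cp by (rule proots_mult) (use nz in auto)
  also have "\<dots> = Spec (svb_mat (k+1) r P' E') + {# complex_of_real (P k - c) #}"
    unfolding Spec_def B_def by simp
  finally show ?thesis .
qed

theorem mainTheorem5:
  fixes lam :: real and r :: nat and p1 :: "nat \<Rightarrow> real"
  assumes lam: "lam \<noteq> 0"
    and r: "r > 1"
    and p1: "\<And>s. p1 s = (if s mod 4 = 1 \<or> s mod 4 = 2 then 0 else lam)"
  shows "\<forall>i \<in> {1..r-1}. \<forall>e0 :: nat \<Rightarrow> nat \<Rightarrow> real.
    (\<forall>l j. i < l \<and> l < j \<and> j \<le> r \<and> even j \<longrightarrow> e0 l j \<noteq> 0) \<longrightarrow>
    (\<exists>(p :: nat \<Rightarrow> nat \<Rightarrow> real) (eps :: nat \<Rightarrow> nat \<Rightarrow> nat \<Rightarrow> real).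
       (\<forall>s. p 1 s = p1 s) \<and>
       (\<forall>l j. i < l \<and> l < j \<and> j \<le> r \<and> even j \<longrightarrow> eps 1 l j = e0 l j) \<and>
       (\<forall>m \<in> {1..i+1}. svb_valid m r (eps m)) \<and>
       (\<forall>k \<in> {1..i}.
          let epsc = (if even (k+1) then eps k k (k+1) else 0);
              xk = p k k - epsc
          in
          \<comment> \<open>(ii)\<close>
          (\<forall>j. even j \<and> k+1 < j \<and> j \<le> r \<longrightarrow> eps k k j = eps k (k+1) j) \<and>
          \<comment> \<open>(iii)\<close>
          (even (k+1) \<longrightarrow> epsc = (real ((k+1) mod 4) - 1) * lam) \<and>
          \<comment> \<open>(iv)\<close>
          p (k+1) (k+1) = p k k + epsc \<and>
          (\<forall>j. even j \<and> k+1 < j \<and> j \<le> r \<longrightarrow> eps (k+1) (k+1) j = sqrt 2 * eps k (k+1) j) \<and>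
          (\<forall>z. k+1 < z \<and> z \<le> r \<longrightarrow> p (k+1) z = p k z \<and> p k z = p1 z) \<and>
          (\<forall>z j. k+1 < z \<and> z < j \<and> j \<le> r \<and> even j \<longrightarrow>
                 eps (k+1) z j = eps k z j \<and> eps k z j = eps 1 z j) \<and>
          \<comment> \<open>(v)\<close>
          Spec (svb_mat k r (p k) (eps k)) =
            Spec (svb_mat (k+1) r (p (k+1)) (eps (k+1))) + {# complex_of_real xk #} \<and>
          xk = (if k mod 4 = 0 then 0 else if k mod 4 = 1 then - lam
                else if k mod 4 = 2 then lam else 2 * lam)))"
proof (intro ballI allI impI)
  fix i :: nat and e0 :: "nat \<Rightarrow> nat \<Rightarrow> real"
  assume iI: "i \<in> {1..r-1}"
    and e0: "\<forall>l j. i < l \<and> l < j \<and> j \<le> r \<and> even j \<longrightarrow> e0 l j \<noteq> 0"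
  have i1: "1 \<le> i" and ir: "i + 1 \<le> r" using iI r by auto
  define cc where "cc k = (if even (k+1) then (real ((k+1) mod 4) - 1) * lam else 0)" for k :: nat
  define p where "p m s = (if s = m then p1 m + cc (m-1) else p1 s)" for m s :: nat
  define D where "D j = (if i+1 < j then e0 (i+1) j / sqrt 2 ^ (i-1) else cc (j-1) / sqrt 2 ^ (j-2))" for j :: nat
  define E where "E s j = (if s \<le> i then sqrt 2 ^ (max s 2 - 2) * D j else e0 s j)" for s j :: nat
  define eps where "eps m s j = (if s = m then sqrt 2 ^ (m-1) * D j else E s j)" for m s j :: nat
  have sq0: "\<And>n. sqrt 2 ^ n \<noteq> (0::real)" by simp
  have cc0: "\<And>j. even j \<Longrightarrow> cc (j-1) \<noteq> 0 \<or> j = 0"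
  proof -
    fix j :: nat assume ej: "even j"
    show "cc (j-1) \<noteq> 0 \<or> j = 0"
    proof (cases "j = 0")
      case False
      then have jj: "j - 1 + 1 = j" by simp
      have "j mod 4 = 0 \<or> j mod 4 = 2" using ej by presburger
      then show ?thesis using lam ej unfolding cc_def jj by auto
    qed simp
  qed
  have Dnz: "\<And>j. even j \<Longrightarrow> 0 < j \<Longrightarrow> j \<le> r \<Longrightarrow> D j \<noteq> 0"
  proof -
    fix j :: nat assume j: "even j" "0 < j" "j \<le> r"
    show "D j \<noteq> 0"
    proof (cases "i+1 < j")
      case True
      then have "e0 (i+1) j \<noteq> 0" using e0 j by auto
      then show ?thesis using True unfolding D_def by simp
    next
      case False
      then show ?thesis using cc0[OF j(1)] j unfolding D_def by simp
    qed
  qed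
  have pstep: "\<And>k. 1 \<le> k \<Longrightarrow> p1 (k+1) = p1 k + cc (k-1)"
  proof -
    fix k :: nat assume k: "1 \<le> k"
    have kk: "k - 1 + 1 = k" using k by simp
    have "k mod 4 = 0 \<or> k mod 4 = 1 \<or> k mod 4 = 2 \<or> k mod 4 = 3" by presburger
    then show "p1 (k+1) = p1 k + cc (k-1)"
    proof (elim disjE)
      assume h: "k mod 4 = 0"
      then have "(k+1) mod 4 = 1" "even k" by presburger+
      then show ?thesis using h kk by (simp add: cc_def p1)
    next
      assume h: "k mod 4 = 1"
      then have "(k+1) mod 4 = 2" "odd k" by presburger+
      then show ?thesis using h kk by (simp add: cc_def p1)
    next
      assume h: "k mod 4 = 2"
      then have "(k+1) mod 4 = 3" "even k" by presburger+
      then show ?thesis using h kk by (simp add: cc_def p1)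
    next
      assume h: "k mod 4 = 3"
      then have "(k+1) mod 4 = 0" "odd k" by presburger+
      then show ?thesis using h kk by (simp add: cc_def p1)
    qed
  qed
  have xval: "\<And>k. 1 \<le> k \<Longrightarrow> p1 k + cc (k-1) - cc k = (if k mod 4 = 0 then 0 else if k mod 4 = 1 then - lam
                else if k mod 4 = 2 then lam else 2 * lam)"
  proof -
    fix k :: nat assume k: "1 \<le> k"
    have kk: "k - 1 + 1 = k" using k by simp
    have "k mod 4 = 0 \<or> k mod 4 = 1 \<or> k mod 4 = 2 \<or> k mod 4 = 3" by presburger
    then show "p1 k + cc (k-1) - cc k = (if k mod 4 = 0 then 0 else if k mod 4 = 1 then - lam
                else if k mod 4 = 2 then lam else 2 * lam)"
    proof (elim disjE)
      assume h: "k mod 4 = 0"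
      then have "(k+1) mod 4 = 1" "even k" by presburger+
      then show ?thesis using h kk by (simp add: cc_def p1)
    next
      assume h: "k mod 4 = 1"
      then have "(k+1) mod 4 = 2" "odd k" by presburger+
      then show ?thesis using h kk by (simp add: cc_def p1)
    next
      assume h: "k mod 4 = 2"
      then have "(k+1) mod 4 = 3" "even k" by presburger+
      then show ?thesis using h kk by (simp add: cc_def p1)
    next
      assume h: "k mod 4 = 3"
      then have "(k+1) mod 4 = 0" "odd k" by presburger+
      then show ?thesis using h kk by (simp add: cc_def p1)
    qed
  qed
  show "\<exists>(p :: nat \<Rightarrow> nat \<Rightarrow> real) (eps :: nat \<Rightarrow> nat \<Rightarrow> nat \<Rightarrow> real).
       (\<forall>s. p 1 s = p1 s) \<and>
       (\<forall>l j. i < l \<and> l < j \<and> j \<le> r \<and> even j \<longrightarrow> eps 1 l j = e0 l j) \<and>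
       (\<forall>m \<in> {1..i+1}. svb_valid m r (eps m)) \<and>
       (\<forall>k \<in> {1..i}.
          let epsc = (if even (k+1) then eps k k (k+1) else 0);
              xk = p k k - epsc
          in
          (\<forall>j. even j \<and> k+1 < j \<and> j \<le> r \<longrightarrow> eps k k j = eps k (k+1) j) \<and>
          (even (k+1) \<longrightarrow> epsc = (real ((k+1) mod 4) - 1) * lam) \<and>
          p (k+1) (k+1) = p k k + epsc \<and>
          (\<forall>j. even j \<and> k+1 < j \<and> j \<le> r \<longrightarrow> eps (k+1) (k+1) j = sqrt 2 * eps k (k+1) j) \<and>
          (\<forall>z. k+1 < z \<and> z \<le> r \<longrightarrow> p (k+1) z = p k z \<and> p k z = p1 z) \<and>
          (\<forall>z j. k+1 < z \<and> z < j \<and> j \<le> r \<and> even j \<longrightarrow>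
                 eps (k+1) z j = eps k z j \<and> eps k z j = eps 1 z j) \<and>
          Spec (svb_mat k r (p k) (eps k)) =
            Spec (svb_mat (k+1) r (p (k+1)) (eps (k+1))) + {# complex_of_real xk #} \<and>
          xk = (if k mod 4 = 0 then 0 else if k mod 4 = 1 then - lam
                else if k mod 4 = 2 then lam else 2 * lam))"
  proof (intro exI conjI)
    show "\<forall>s. p 1 s = p1 s" unfolding p_def cc_def by simp
    show "\<forall>l j. i < l \<and> l < j \<and> j \<le> r \<and> even j \<longrightarrow> eps 1 l j = e0 l j"
      using i1 unfolding eps_def E_def by auto
    show "\<forall>m \<in> {1..i+1}. svb_valid m r (eps m)"
      unfolding svb_valid_def
    proof (intro ballI allI impI)
      fix m s j assume m: "m \<in> {1..i+1}" and h: "m \<le> s \<and> s < j \<and> j \<le> r \<and> even j"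
      have Dj: "D j \<noteq> 0" using Dnz h by auto
      show "eps m s j \<noteq> 0"
        unfolding eps_def E_def using Dj e0 h by auto
    qed
    show "\<forall>k \<in> {1..i}.
          let epsc = (if even (k+1) then eps k k (k+1) else 0);
              xk = p k k - epsc
          in
          (\<forall>j. even j \<and> k+1 < j \<and> j \<le> r \<longrightarrow> eps k k j = eps k (k+1) j) \<and>
          (even (k+1) \<longrightarrow> epsc = (real ((k+1) mod 4) - 1) * lam) \<and>
          p (k+1) (k+1) = p k k + epsc \<and>
          (\<forall>j. even j \<and> k+1 < j \<and> j \<le> r \<longrightarrow> eps (k+1) (k+1) j = sqrt 2 * eps k (k+1) j) \<and>
          (\<forall>z. k+1 < z \<and> z \<le> r \<longrightarrow> p (k+1) z = p k z \<and> p k z = p1 z) \<and>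
          (\<forall>z j. k+1 < z \<and> z < j \<and> j \<le> r \<and> even j \<longrightarrow>
                 eps (k+1) z j = eps k z j \<and> eps k z j = eps 1 z j) \<and>
          Spec (svb_mat k r (p k) (eps k)) =
            Spec (svb_mat (k+1) r (p (k+1)) (eps (k+1))) + {# complex_of_real xk #} \<and>
          xk = (if k mod 4 = 0 then 0 else if k mod 4 = 1 then - lam
                else if k mod 4 = 2 then lam else 2 * lam)"
      unfolding Let_def
    proof (intro ballI)
      fix k assume kI: "k \<in> {1..i}"
      have k1: "1 \<le> k" and ki: "k \<le> i" using kI by auto
      define c where "c = (if even (k+1) then eps k k (k+1) else 0)"
      have cc: "c = cc k"
      proof (cases "even (k+1)")
        case True
        have "eps k k (k+1) = sqrt 2 ^ (k-1) * (cc k / sqrt 2 ^ (k - 1))"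
          unfolding eps_def D_def using ki by simp
        also have "\<dots> = cc k" using sq0 by simp
        finally show ?thesis unfolding c_def using True by simp
      next
        case False
        then show ?thesis unfolding c_def cc_def by simp
      qed
      have ii: "\<forall>j. even j \<and> k+1 < j \<and> j \<le> r \<longrightarrow> eps k k j = eps k (k+1) j"
      proof (intro allI impI)
        fix j assume j: "even j \<and> k+1 < j \<and> j \<le> r"
        show "eps k k j = eps k (k+1) j"
        proof (cases "k+1 \<le> i")
          case True
          then show ?thesis unfolding eps_def E_def using k1 by (simp add: max_def)
        next
          case False
          then have ki': "k = i" using ki by simp
          have "eps k k j = sqrt 2 ^ (i-1) * (e0 (i+1) j / sqrt 2 ^ (i-1))"
            unfolding eps_def D_def using ki' j by simp
          also have "\<dots> = e0 (i+1) j" using sq0 by simp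
          also have "\<dots> = eps k (k+1) j" unfolding eps_def E_def using ki' by simp
          finally show ?thesis .
        qed
      qed
      have iv1: "p (k+1) (k+1) = p k k + c"
        unfolding cc p_def using pstep[OF k1] by simp
      have iv2: "\<forall>j. even j \<and> k+1 < j \<and> j \<le> r \<longrightarrow> eps (k+1) (k+1) j = sqrt 2 * eps k (k+1) j"
      proof (intro allI impI)
        fix j assume j: "even j \<and> k+1 < j \<and> j \<le> r"
        show "eps (k+1) (k+1) j = sqrt 2 * eps k (k+1) j"
        proof (cases "k+1 \<le> i")
          case True
          have pw: "sqrt 2 ^ k = sqrt 2 * sqrt 2 ^ (k-1)" using k1 by (cases k) auto
          show ?thesis unfolding eps_def E_def using k1 True pw by (simp add: max_def)
        next
          case False
          then have ki': "k = i" using ki by simp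
          have "eps (k+1) (k+1) j = sqrt 2 ^ i * (e0 (i+1) j / sqrt 2 ^ (i-1))"
            unfolding eps_def D_def using ki' j by simp
          also have "\<dots> = sqrt 2 * (sqrt 2 ^ (i-1) * (e0 (i+1) j / sqrt 2 ^ (i-1)))"
            using i1 by (cases i) auto
          also have "\<dots> = sqrt 2 * e0 (i+1) j" using sq0 by simp
          also have "\<dots> = sqrt 2 * eps k (k+1) j" unfolding eps_def E_def using ki' by simp
          finally show ?thesis .
        qed
      qed
      have iv3: "\<forall>z. k+1 < z \<and> z \<le> r \<longrightarrow> p (k+1) z = p k z \<and> p k z = p1 z"
        unfolding p_def by auto
      have iv4: "\<forall>z j. k+1 < z \<and> z < j \<and> j \<le> r \<and> even j \<longrightarrow>
                 eps (k+1) z j = eps k z j \<and> eps k z j = eps 1 z j"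
        unfolding eps_def using k1 by auto
      have kr: "k < r" using ki ir by simp
      have pk: "p k (k+1) = p k k" unfolding p_def using pstep[OF k1] by simp
      have v: "Spec (svb_mat k r (p k) (eps k)) = Spec (svb_mat (k+1) r (p (k+1)) (eps (k+1))) + {# complex_of_real (p k k - c) #}"
        by (rule svb_step[where P="p k" and E="eps k" and P'="p (k+1)" and E'="eps (k+1)", OF kr pk c_def ii iv1]) (use iv2 iv3 iv4 in auto)
      have xk: "p k k - c = (if k mod 4 = 0 then 0 else if k mod 4 = 1 then - lam
                else if k mod 4 = 2 then lam else 2 * lam)"
        unfolding cc using xval[OF k1] unfolding p_def by simp
      have iii: "even (k+1) \<longrightarrow> c = (real ((k+1) mod 4) - 1) * lam" unfolding cc cc_def by simp
      show "(\<forall>j. even j \<and> k+1 < j \<and> j \<le> r \<longrightarrow> eps k k j = eps k (k+1) j) \<and>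
          (even (k+1) \<longrightarrow> (if even (k+1) then eps k k (k+1) else 0) = (real ((k+1) mod 4) - 1) * lam) \<and>
          p (k+1) (k+1) = p k k + (if even (k+1) then eps k k (k+1) else 0) \<and>
          (\<forall>j. even j \<and> k+1 < j \<and> j \<le> r \<longrightarrow> eps (k+1) (k+1) j = sqrt 2 * eps k (k+1) j) \<and>
          (\<forall>z. k+1 < z \<and> z \<le> r \<longrightarrow> p (k+1) z = p k z \<and> p k z = p1 z) \<and>
          (\<forall>z j. k+1 < z \<and> z < j \<and> j \<le> r \<and> even j \<longrightarrow>
                 eps (k+1) z j = eps k z j \<and> eps k z j = eps 1 z j) \<and>
          Spec (svb_mat k r (p k) (eps k)) =
            Spec (svb_mat (k+1) r (p (k+1)) (eps (k+1))) + {# complex_of_real (p k k - (if even (k+1) then eps k k (k+1) else 0)) #} \<and>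
          p k k - (if even (k+1) then eps k k (k+1) else 0) = (if k mod 4 = 0 then 0 else if k mod 4 = 1 then - lam
                else if k mod 4 = 2 then lam else 2 * lam)"
        using ii iii iv1 iv2 iv3 iv4 v xk unfolding c_def by blast
    qed
  qed
qed

end
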